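(* Let $\underline q>0$, let $\theta^*\in\Theta(\underline q)$, and let the fixed initial distribution $\mu$ satisfy $\mu_i\ge\underline q$ for all $i$. If (A1) holds, then for every $\epsilon\in(0,1)$ for which $\Theta_\epsilon$ is defined in (A1), there exists $N\in\mathbb N$ such that for all $n\ge N$ and all $\theta\in\Theta_\epsilon$, $$\frac1n\,KL\big(P_n^{\theta^*},P_n^{\theta,\mu}\big)\le\frac{3}{\underline q}\,\epsilon,$$ where $P_n^{\theta,\mu}=p_n^{\theta,\mu}\lambda^{\otimes n}$ is the law of $Y_{1:n}$ under $\mathbb P^{\theta,\mu}$ and $KL(P_1,P_2)=\int p_1\log(p_1/p_2)$ if $P_1\ll P_2$, $+\infty$ otherwise.
   Context: Fix integers $k\ge1$, $d\ge1$. $\lambda$ is a $\sigma$-finite reference measure on $\mathbb R^d$ (Borel $\sigma$-field) and $\mathcal F$ is the set of probability densities with respect to $\lambda$. $\Delta_k=\{x\in[0,\infty)^k:\sum_i x_i=1\}$; a transition matrix is an element $Q\in\Delta_k^k$ (each row lies in $\Delta_k$). For $\underline q\ge0$, $\Delta^k(\underline q)=\{Q\in\Delta_k^k:\min_{i,j}Q_{i,j}\ge\underline q\}$, $\Theta=\Delta_k^k\times\mathcal F^k$ and $\Theta(\underline q)=\Delta^k(\underline q)\times\mathcal F^k$. For $\underline q>0$ and $Q\in\Delta^k(\underline q)$, $\mu^Q$ denotes the unique stationary distribution of $Q$. For $\theta=(Q,f)$, $f=(f_1,\dots,f_k)\in\mathcal F^k$, and an initial distribution $\nu\in\Delta_k$,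 $\mathbb P^{\theta,\nu}$ is the law of the hidden Markov model $(X_t,Y_t)_{t\ge1}$: $(X_t)$ is a Markov chain on $\{1,\dots,k\}$ with initial law $\nu$ and transition matrix $Q$, and conditionally on $(X_t)_t$ the variables $Y_t\in\mathbb R^d$ are independent, $Y_t$ having density $f_{X_t}$ with respect to $\lambda$. $\mathbb P^\theta:=\mathbb P^{\theta,\mu^Q}$. The density of $Y_{1:l}$ with respect to $\lambda^{\otimes l}$ is $p_l^{\theta,\nu}(y_{1:l})=\sum_{x_1,\dots,x_l=1}^k\nu_{x_1}Q_{x_1,x_2}\cdots Q_{x_{l-1},x_l}f_{x_1}(y_1)\cdots f_{x_l}(y_l)$; $p_l^\theta:=p_l^{\theta,\mu^Q}$, $P_l^\theta:=p_l^\theta\lambda^{\otimes l}$. The prior is $\pi=\pi_Q\otimes\pi_f$ on $\Theta$ with a fixed initial distribution $\mu\in\Delta_k$. $\theta^*=(Q^*,f^* )$ is the true parameter. $\|M\|=\max_{i,j}|M_{i,j}|$. Assumption (A1) (for given $\underline q>0$): there is $\epsilon_0>0$ such that for every $\epsilon\in(0,\epsilon_0)$ there is a set $\Theta_\epsilon\subset\Theta(\underline q)$ with $\pi(\Theta_\epsilon)>0$ such that every $\theta=(Q,f)\in\Theta_\epsilon$ satisfies: (A1a) $\|Q-Q^*\|<\epsilon$; (A1b) $\max_{1\le i\le k}\int f_i^*(y)\max_{1\le j\le k}\log\big(f_j^*(y)/f_j(y)\big)\lambda(dy)<\epsilon$; (A1c) for all $y$ with $\sum_i f_i^*(y)>0$,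 $\sum_j f_j(y)>0$; (A1d) $\sup_{y:\sum_i f_i^*(y)>0}\max_j f_j(y)<\infty$; (A1e) $\sum_{i=1}^k\int f_i^*(y)\,\big|\log\big(\sum_{j=1}^k f_j(y)\big)\big|\lambda(dy)<\infty$. *)

theory Defs
  imports "HOL-Probability.Probability"
begin

definition distr_on :: "nat \<Rightarrow> (nat \<Rightarrow> real) \<Rightarrow> bool" where
  "distr_on k m \<longleftrightarrow> (\<forall>i<k. 0 \<le> m i) \<and> (\<Sum>i<k. m i) = 1"

definition trans_mat :: "nat \<Rightarrow> (nat \<Rightarrow> nat \<Rightarrow> real) \<Rightarrow> bool" where
  "trans_mat k Q \<longleftrightarrow> (\<forall>i<k. distr_on k (Q i))"

definition Delta_q :: "nat \<Rightarrow> real \<Rightarrow> (nat \<Rightarrow> nat \<Rightarrow> real) \<Rightarrow> bool" where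
  "Delta_q k q Q \<longleftrightarrow> trans_mat k Q \<and> (\<forall>i<k. \<forall>j<k. q \<le> Q i j)"

definition is_density :: "'a measure \<Rightarrow> ('a \<Rightarrow> real) \<Rightarrow> bool" where
  "is_density lam g \<longleftrightarrow> g \<in> borel_measurable lam \<and> (\<forall>y. 0 \<le> g y)
     \<and> (\<integral>\<^sup>+ y. ennreal (g y) \<partial>lam) = 1"

type_synonym 'a param = "(nat \<Rightarrow> nat \<Rightarrow> real) \<times> (nat \<Rightarrow> 'a \<Rightarrow> real)"

definition Theta_q :: "nat \<Rightarrow> real \<Rightarrow> 'a measure \<Rightarrow> 'a param set" where
  "Theta_q k q lam = {(Q, f). Delta_q k q Q \<and> (\<forall>i<k. is_density lam (f i))}"

text \<open>the (unique, for q>0) stationary distribution of Q, extended by 0 outside 0..k-1\<close>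
definition stat_dist :: "nat \<Rightarrow> (nat \<Rightarrow> nat \<Rightarrow> real) \<Rightarrow> (nat \<Rightarrow> real)" where
  "stat_dist k Q = (THE m. distr_on k m \<and> (\<forall>i\<ge>k. m i = 0)
        \<and> (\<forall>j<k. (\<Sum>i<k. m i * Q i j) = m j))"

text \<open>density of Y_{1:n} (indexed 0..n-1) under initial law nu, w.r.t. lam^n\<close>
definition hmm_dens :: "nat \<Rightarrow> nat \<Rightarrow> (nat \<Rightarrow> real) \<Rightarrow> 'a param \<Rightarrow> (nat \<Rightarrow> 'a) \<Rightarrow> real" where
  "hmm_dens k n nu \<theta> y = (if n = 0 then 1 else
     (\<Sum>x\<in>{0..<n} \<rightarrow>\<^sub>E {0..<k}. nu (x 0)
        * (\<Prod>t\<in>{0..<n-1}. fst \<theta> (x t) (x (Suc t)))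
        * (\<Prod>t\<in>{0..<n}. snd \<theta> (x t) (y t))))"

definition prod_ref :: "'a measure \<Rightarrow> nat \<Rightarrow> (nat \<Rightarrow> 'a) measure" where
  "prod_ref lam n = PiM {0..<n} (\<lambda>_. lam)"

definition eint :: "'b measure \<Rightarrow> ('b \<Rightarrow> ereal) \<Rightarrow> ereal" where
  "eint M g = enn2ereal (\<integral>\<^sup>+ x. e2ennreal (g x) \<partial>M) - enn2ereal (\<integral>\<^sup>+ x. e2ennreal (- g x) \<partial>M)"

definition KL_dens :: "'b measure \<Rightarrow> ('b \<Rightarrow> real) \<Rightarrow> ('b \<Rightarrow> real) \<Rightarrow> ereal" where
  "KL_dens M p1 p2 =
    (if absolutely_continuous (density M (\<lambda>y. ennreal (p2 y))) (density M (\<lambda>y. ennreal (p1 y)))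
     then eint M (\<lambda>y. if p1 y = 0 then 0 else ereal (p1 y * ln (p1 y / p2 y)))
     else \<infinity>)"

text \<open>extended log ratio log(a/b) for a,b >= 0: log(a/0)=+inf for a>0, log(0/b)=-inf;
  the undetermined case 0/0 is taken as -inf (the term is ignored in the max)\<close>
definition elogratio :: "real \<Rightarrow> real \<Rightarrow> ereal" where
  "elogratio a b = (if 0 < a \<and> 0 < b then ereal (ln (a / b))
                    else if 0 < a then \<infinity> else -\<infinity>)"

definition mat_norm :: "nat \<Rightarrow> (nat \<Rightarrow> nat \<Rightarrow> real) \<Rightarrow> real" where
  "mat_norm k M = Max {\<bar>M i j\<bar> | i j. i < k \<and> j < k}"

text \<open>Conditions (A1a)-(A1e) for theta = (Q,f) relative to theta* = (Qs,fs)\<close>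
definition A1_conds :: "nat \<Rightarrow> 'a measure \<Rightarrow> 'a param \<Rightarrow> real \<Rightarrow> 'a param \<Rightarrow> bool" where
  "A1_conds k lam \<theta>s \<epsilon> \<theta> \<longleftrightarrow>
     (let Qs = fst \<theta>s; fs = snd \<theta>s; Q = fst \<theta>; f = snd \<theta> in
       mat_norm k (\<lambda>i j. Q i j - Qs i j) < \<epsilon>
     \<and> Max ((\<lambda>i. eint lam (\<lambda>y. ereal (fs i y) * Max ((\<lambda>j. elogratio (fs j y) (f j y)) ` {0..<k})))
             ` {0..<k}) < ereal \<epsilon>
     \<and> (\<forall>y. (\<Sum>i<k. fs i y) > 0 \<longrightarrow> (\<Sum>j<k. f j y) > 0)
     \<and> (\<exists>B. \<forall>y. (\<Sum>i<k. fs i y) > 0 \<longrightarrow> (\<forall>j<k. f j y \<le> B))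
     \<and> (\<Sum>i<k. \<integral>\<^sup>+ y. ennreal (fs i y * \<bar>ln (\<Sum>j<k. f j y)\<bar>) \<partial>lam) < \<infinity>)"

end

theory Submission
  imports Defs
begin

lemma Delta_q_bounds:
  assumes D: "Delta_q k q Q" and k: "k \<ge> 1"
  shows "real k * q \<le> 1" "\<forall>i<k. \<forall>j<k. 0 \<le> Q i j" "\<forall>i<k. (\<Sum>j<k. Q i j) = 1"
proof -
  have d0: "distr_on k (Q 0)" using D k unfolding Delta_q_def trans_mat_def by auto
  have "(\<Sum>j<k. q) \<le> (\<Sum>j<k. Q 0 j)" using D k unfolding Delta_q_def by (intro sum_mono) auto
  then show "real k * q \<le> 1" using d0 unfolding distr_on_def by simp
  show "\<forall>i<k. \<forall>j<k. 0 \<le> Q i j" "\<forall>i<k. (\<Sum>j<k. Q i j) = 1"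
    using D unfolding Delta_q_def trans_mat_def distr_on_def by auto
qed

lemma contract:
  assumes D: "Delta_q k q Q" and k: "k \<ge> 1" and d: "(\<Sum>i<k. d i) = 0"
  shows "(\<Sum>j<k. \<bar>\<Sum>i<k. d i * Q i j\<bar>) \<le> (1 - real k * q) * (\<Sum>i<k. \<bar>d i\<bar>)"
proof -
  have Qq: "\<forall>i<k. \<forall>j<k. q \<le> Q i j" using D unfolding Delta_q_def by auto
  have rs: "\<forall>i<k. (\<Sum>j<k. Q i j) = 1" using Delta_q_bounds[OF D k] by auto
  have "(\<Sum>j<k. \<bar>\<Sum>i<k. d i * Q i j\<bar>) = (\<Sum>j<k. \<bar>\<Sum>i<k. d i * (Q i j - q)\<bar>)"
  proof (rule sum.cong[OF refl])
    fix j assume "j \<in> {..<k}"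
    have "(\<Sum>i<k. d i * (Q i j - q)) = (\<Sum>i<k. d i * Q i j) - q * (\<Sum>i<k. d i)"
      by (simp add: algebra_simps sum_subtractf sum_distrib_left)
    then show "\<bar>\<Sum>i<k. d i * Q i j\<bar> = \<bar>\<Sum>i<k. d i * (Q i j - q)\<bar>" using d by simp
  qed
  also have "\<dots> \<le> (\<Sum>j<k. \<Sum>i<k. \<bar>d i\<bar> * (Q i j - q))"
  proof (rule sum_mono)
    fix j assume j: "j \<in> {..<k}"
    have "\<bar>\<Sum>i<k. d i * (Q i j - q)\<bar> \<le> (\<Sum>i<k. \<bar>d i * (Q i j - q)\<bar>)" by (rule sum_abs)
    also have "\<dots> = (\<Sum>i<k. \<bar>d i\<bar> * (Q i j - q))"
      using Qq j by (intro sum.cong) (auto simp: abs_mult)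
    finally show "\<bar>\<Sum>i<k. d i * (Q i j - q)\<bar> \<le> (\<Sum>i<k. \<bar>d i\<bar> * (Q i j - q))" .
  qed
  also have "\<dots> = (\<Sum>i<k. \<bar>d i\<bar> * ((\<Sum>j<k. Q i j) - real k * q))"
    by (subst sum.swap) (simp add: sum_distrib_left[symmetric] sum_subtractf)
  also have "\<dots> = (\<Sum>i<k. \<bar>d i\<bar> * (1 - real k * q))"
    using rs by (intro sum.cong) auto
  also have "\<dots> = (1 - real k * q) * (\<Sum>i<k. \<bar>d i\<bar>)" by (simp add: sum_distrib_left mult.commute)
  finally show ?thesis .
qed

primrec piter :: "nat \<Rightarrow> (nat\<Rightarrow>nat\<Rightarrow>real) \<Rightarrow> nat \<Rightarrow> nat \<Rightarrow> real" where
  "piter k Q 0 = (\<lambda>i. if i = 0 then 1 else 0)"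
| "piter k Q (Suc N) = (\<lambda>j. if j < k then (\<Sum>i<k. piter k Q N i * Q i j) else 0)"

lemma piter_distr:
  assumes D: "Delta_q k q Q" and k: "k \<ge> 1"
  shows "distr_on k (piter k Q N) \<and> (\<forall>i\<ge>k. piter k Q N i = 0)"
proof (induction N)
  case 0
  have "(\<Sum>i<k. (if i = 0 then 1 else 0::real)) = 1" using k by (simp add: sum.delta)
  then show ?case using k by (auto simp: distr_on_def)
next
  case (Suc N)
  have nn: "\<forall>i<k. \<forall>j<k. 0 \<le> Q i j" and rs: "\<forall>i<k. (\<Sum>j<k. Q i j) = 1"
    using Delta_q_bounds[OF D k] by auto
  have "(\<Sum>j<k. \<Sum>i<k. piter k Q N i * Q i j) = (\<Sum>i<k. piter k Q N i * (\<Sum>j<k. Q i j))"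
    by (subst sum.swap) (simp add: sum_distrib_left)
  also have "\<dots> = (\<Sum>i<k. piter k Q N i)" using rs by simp
  finally have "(\<Sum>j<k. \<Sum>i<k. piter k Q N i * Q i j) = 1" using Suc unfolding distr_on_def by simp
  moreover have "\<forall>j<k. 0 \<le> (\<Sum>i<k. piter k Q N i * Q i j)"
    using Suc nn unfolding distr_on_def by (auto intro!: sum_nonneg)
  ultimately show ?case unfolding distr_on_def by auto
qed

lemma stat_unique_exists:
  assumes D: "Delta_q k q Q" and k: "k \<ge> 1" and q: "q > 0"
  shows "\<exists>!m. distr_on k m \<and> (\<forall>i\<ge>k. m i = 0) \<and> (\<forall>j<k. (\<Sum>i<k. m i * Q i j) = m j)"
proof -
  define r where "r = 1 - real k * q"
  have r0: "0 \<le> r" "r < 1" using Delta_q_bounds[OF D k] q k unfolding r_def by auto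
  define v where "v = piter k Q"
  have vd: "\<And>N. distr_on k (v N) \<and> (\<forall>i\<ge>k. v N i = 0)" unfolding v_def using piter_distr[OF D k] by blast
  define e where "e N = (\<Sum>i<k. \<bar>v (Suc N) i - v N i\<bar>)" for N
  have eS: "e (Suc N) \<le> r * e N" for N
  proof -
    have "(\<Sum>i<k. v (Suc N) i - v N i) = 0" using vd[of N] vd[of "Suc N"]
      by (simp add: sum_subtractf distr_on_def)
    note c = contract[OF D k this]
    have "e (Suc N) = (\<Sum>j<k. \<bar>\<Sum>i<k. (v (Suc N) i - v N i) * Q i j\<bar>)"
      unfolding e_def v_def by (intro sum.cong) (auto simp: left_diff_distrib sum_subtractf)
    then show ?thesis using c unfolding e_def r_def by simp
  qed
  have e0: "e 0 \<le> 2"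
  proof -
    have "e 0 \<le> (\<Sum>i<k. \<bar>v 1 i\<bar> + \<bar>v 0 i\<bar>)" unfolding e_def by (intro sum_mono) auto
    also have "\<dots> = (\<Sum>i<k. v 1 i) + (\<Sum>i<k. v 0 i)" using vd[of 0] vd[of 1]
      by (simp add: sum.distrib distr_on_def)
    also have "\<dots> = 2" using vd[of 0] vd[of 1] by (simp add: distr_on_def)
    finally show ?thesis .
  qed
  have eN: "e N \<le> 2 * r ^ N" for N
  proof (induction N)
    case 0 then show ?case using e0 by simp
  next
    case (Suc N)
    have "e (Suc N) \<le> r * e N" by (rule eS)
    also have "\<dots> \<le> r * (2 * r ^ N)" using Suc r0 by (intro mult_left_mono) auto
    finally show ?case by simp
  qed
  have conv: "convergent (\<lambda>N. v N j)" for j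
  proof (cases "j < k")
    case False then show ?thesis using vd by (simp add: convergent_const)
  next
    case True
    have b: "norm (v (Suc N) j - v N j) \<le> 2 * r ^ N" for N
    proof -
      have "\<bar>v (Suc N) j - v N j\<bar> \<le> e N" unfolding e_def
        using True by (intro member_le_sum) auto
      then show ?thesis using eN[of N] by simp
    qed
    have "summable (\<lambda>N. 2 * r ^ N)" using r0 by (intro summable_mult summable_geometric) auto
    then have s: "summable (\<lambda>N. v (Suc N) j - v N j)" by (rule summable_comparison_test[rotated]) (use b in blast)
    have "(\<lambda>N. (\<Sum>L<N. v (Suc L) j - v L j)) \<longlonglongrightarrow> suminf (\<lambda>N. v (Suc N) j - v N j)"
      using s by (rule summable_LIMSEQ)
    then have "(\<lambda>N. v 0 j + (\<Sum>L<N. v (Suc L) j - v L j)) \<longlonglongrightarrow> v 0 j + suminf (\<lambda>N. v (Suc N) j - v N j)"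
      by (intro tendsto_add) auto
    moreover have "v 0 j + (\<Sum>L<N. v (Suc L) j - v L j) = v N j" for N
      by (induction N) auto
    ultimately show ?thesis unfolding convergent_def by auto
  qed
  define m where "m j = lim (\<lambda>N. v N j)" for j
  have lm: "(\<lambda>N. v N j) \<longlonglongrightarrow> m j" for j using conv[of j] unfolding m_def by (simp add: convergent_LIMSEQ_iff)
  have P: "distr_on k m \<and> (\<forall>i\<ge>k. m i = 0) \<and> (\<forall>j<k. (\<Sum>i<k. m i * Q i j) = m j)"
  proof (intro conjI allI impI)
    show "m i = 0" if "k \<le> i" for i
      using lm[of i] vd that by (simp add: LIMSEQ_const_iff)
    have "\<forall>i<k. 0 \<le> m i"
      using lm vd by (auto intro!: LIMSEQ_le_const[OF lm] simp: distr_on_def)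
    moreover have "(\<lambda>N. \<Sum>i<k. v N i) \<longlonglongrightarrow> (\<Sum>i<k. m i)" by (intro tendsto_sum lm)
    then have "(\<Sum>i<k. m i) = 1" using vd by (simp add: distr_on_def LIMSEQ_const_iff)
    ultimately show "distr_on k m" unfolding distr_on_def by auto
    fix j assume j: "j < k"
    have "(\<lambda>N. \<Sum>i<k. v N i * Q i j) \<longlonglongrightarrow> (\<Sum>i<k. m i * Q i j)" by (intro tendsto_sum tendsto_mult lm tendsto_const)
    moreover have "(\<lambda>N. \<Sum>i<k. v N i * Q i j) = (\<lambda>N. v (Suc N) j)" using j unfolding v_def by auto
    moreover have "(\<lambda>N. v (Suc N) j) \<longlonglongrightarrow> m j" using lm[of j] by (rule LIMSEQ_Suc)
    ultimately show "(\<Sum>i<k. m i * Q i j) = m j" using LIMSEQ_unique by metis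
  qed
  have U: "m1 = m2" if h1: "distr_on k m1 \<and> (\<forall>i\<ge>k. m1 i = 0) \<and> (\<forall>j<k. (\<Sum>i<k. m1 i * Q i j) = m1 j)"
     and h2: "distr_on k m2 \<and> (\<forall>i\<ge>k. m2 i = 0) \<and> (\<forall>j<k. (\<Sum>i<k. m2 i * Q i j) = m2 j)" for m1 m2
  proof -
    define d where "d i = m1 i - m2 i" for i
    have "(\<Sum>i<k. d i) = 0" using h1 h2 unfolding d_def distr_on_def by (simp add: sum_subtractf)
    note c = contract[OF D k this]
    have "(\<Sum>j<k. \<bar>\<Sum>i<k. d i * Q i j\<bar>) = (\<Sum>j<k. \<bar>d j\<bar>)"
      using h1 h2 unfolding d_def by (intro sum.cong) (auto simp: left_diff_distrib sum_subtractf)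
    then have "(\<Sum>j<k. \<bar>d j\<bar>) \<le> r * (\<Sum>j<k. \<bar>d j\<bar>)" using c unfolding r_def by simp
    then have "(1 - r) * (\<Sum>j<k. \<bar>d j\<bar>) \<le> 0" by (simp add: algebra_simps)
    moreover have "0 \<le> (\<Sum>j<k. \<bar>d j\<bar>)" by (intro sum_nonneg) auto
    ultimately have "(\<Sum>j<k. \<bar>d j\<bar>) = 0" using r0 by (simp add: mult_le_0_iff)
    then have "\<forall>j<k. d j = 0" by (subst (asm) sum_nonneg_eq_0_iff) auto
    then show ?thesis using h1 h2 unfolding d_def by (intro ext) (metis eq_iff_diff_eq_0 not_le)
  qed
  show ?thesis using P U by blast
qed

lemma stat_dist_distr:
  assumes D: "Delta_q k q Q" and k: "k \<ge> 1" and q: "q > 0"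
  shows "distr_on k (stat_dist k Q)"
  using theI'[OF stat_unique_exists[OF D k q]] unfolding stat_dist_def by blast



lemma sum_PiE_Suc:
  fixes K :: "nat set"
  shows "(\<Sum>x\<in>{0..<Suc n} \<rightarrow>\<^sub>E K. F x) = (\<Sum>g\<in>{0..<n} \<rightarrow>\<^sub>E K. \<Sum>y\<in>K. F (g(n:=y)))"
proof -
  have e: "{0..<Suc n} \<rightarrow>\<^sub>E K = (\<lambda>(y,g). g(n:=y)) ` (K \<times> ({0..<n} \<rightarrow>\<^sub>E K))"
    using PiE_insert_eq[of n "{0..<n}" "\<lambda>_. K"] by (simp add: atLeast0_lessThan_Suc)
  have inj: "inj_on (\<lambda>(y,g). g(n:=y)) (K \<times> ({0..<n} \<rightarrow>\<^sub>E K))"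
  proof (rule inj_onI, clarsimp)
    fix y g y' g' assume g: "g \<in> {0..<n} \<rightarrow>\<^sub>E K" and g': "g' \<in> {0..<n} \<rightarrow>\<^sub>E K"
      and eq: "g(n := y) = g'(n := y')"
    have "y = y'" using fun_cong[OF eq, of n] by simp
    moreover have "g = g'"
    proof
      fix i show "g i = g' i"
      proof (cases "i = n")
        case True then show ?thesis using g g' by (simp add: PiE_def extensional_def)
      next
        case False then show ?thesis using fun_cong[OF eq, of i] by simp
      qed
    qed
    ultimately show "y = y' \<and> g = g'" by simp
  qed
  have "(\<Sum>x\<in>{0..<Suc n} \<rightarrow>\<^sub>E K. F x) = (\<Sum>p\<in>K \<times> ({0..<n} \<rightarrow>\<^sub>E K). F ((\<lambda>(y,g). g(n:=y)) p))"
    unfolding e by (rule sum.reindex[OF inj, unfolded comp_def])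
  also have "\<dots> = (\<Sum>y\<in>K. \<Sum>g\<in>{0..<n} \<rightarrow>\<^sub>E K. F (g(n:=y)))"
    by (simp add: sum.cartesian_product split_beta)
  also have "\<dots> = (\<Sum>g\<in>{0..<n} \<rightarrow>\<^sub>E K. \<Sum>y\<in>K. F (g(n:=y)))" by (rule sum.swap)
  finally show ?thesis .
qed

lemma path_sum:
  fixes K :: "nat set"
  assumes nu: "(\<Sum>j\<in>K. \<nu> j) = 1" and Q: "\<forall>i\<in>K. (\<Sum>j\<in>K. Q i j) = 1"
  shows "(\<Sum>x\<in>{0..<Suc n} \<rightarrow>\<^sub>E K. \<nu> (x 0) * (\<Prod>t\<in>{0..<n}. Q (x t) (x (Suc t)))) = (1::real)"
proof (induction n)
  case 0
  show ?case using nu by (subst sum_PiE_Suc) simp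
next
  case (Suc n)
  have "(\<Sum>x\<in>{0..<Suc (Suc n)} \<rightarrow>\<^sub>E K. \<nu> (x 0) * (\<Prod>t\<in>{0..<Suc n}. Q (x t) (x (Suc t))))
     = (\<Sum>g\<in>{0..<Suc n} \<rightarrow>\<^sub>E K. \<Sum>y\<in>K. \<nu> (g 0) * (\<Prod>t\<in>{0..<n}. Q (g t) (g (Suc t))) * Q (g n) y)"
    by (subst sum_PiE_Suc) (intro sum.cong refl, simp add: atLeast0_lessThan_Suc mult.commute mult.left_commute)
  also have "\<dots> = (\<Sum>g\<in>{0..<Suc n} \<rightarrow>\<^sub>E K. \<nu> (g 0) * (\<Prod>t\<in>{0..<n}. Q (g t) (g (Suc t))))"
  proof (intro sum.cong refl)
    fix g assume "g \<in> {0..<Suc n} \<rightarrow>\<^sub>E K"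
    then have "g n \<in> K" by auto
    then show "(\<Sum>y\<in>K. \<nu> (g 0) * (\<Prod>t\<in>{0..<n}. Q (g t) (g (Suc t))) * Q (g n) y)
        = \<nu> (g 0) * (\<Prod>t\<in>{0..<n}. Q (g t) (g (Suc t)))"
      using Q by (simp add: sum_distrib_left[symmetric])
  qed
  finally show ?case using Suc by simp
qed

lemma prod_int:
  assumes lam: "sigma_finite_measure lam" and I: "finite I" "t \<in> I"
    and dens: "\<forall>s\<in>I. is_density lam (\<phi> s)" and F: "F \<in> borel_measurable lam"
  shows "(\<integral>\<^sup>+y. (\<Prod>s\<in>I. ennreal (\<phi> s (y s))) * F (y t) \<partial>PiM I (\<lambda>_. lam))
       = (\<integral>\<^sup>+z. ennreal (\<phi> t z) * F z \<partial>lam)"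
proof -
  interpret product_sigma_finite "\<lambda>_. lam" by (simp add: product_sigma_finite_def lam)
  define H where "H s = (if s = t then (\<lambda>z. ennreal (\<phi> t z) * F z) else (\<lambda>z. ennreal (\<phi> s z)))" for s
  have Hm: "H s \<in> borel_measurable lam" if "s \<in> I" for s
    using dens that F unfolding H_def is_density_def by auto
  have "(\<lambda>y. (\<Prod>s\<in>I. ennreal (\<phi> s (y s))) * F (y t)) = (\<lambda>y. \<Prod>s\<in>I. H s (y s))"
  proof
    fix y
    have "(\<Prod>s\<in>I. H s (y s)) = H t (y t) * (\<Prod>s\<in>I-{t}. H s (y s))" using I by (simp add: prod.remove)
    also have "(\<Prod>s\<in>I-{t}. H s (y s)) = (\<Prod>s\<in>I-{t}. ennreal (\<phi> s (y s)))"
      unfolding H_def by (intro prod.cong) auto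
    also have "(\<Prod>s\<in>I. ennreal (\<phi> s (y s))) = ennreal (\<phi> t (y t)) * (\<Prod>s\<in>I-{t}. ennreal (\<phi> s (y s)))"
      using I by (simp add: prod.remove)
    ultimately show "(\<Prod>s\<in>I. ennreal (\<phi> s (y s))) * F (y t) = (\<Prod>s\<in>I. H s (y s))"
      unfolding H_def by (simp add: mult_ac)
  qed
  then have "(\<integral>\<^sup>+y. (\<Prod>s\<in>I. ennreal (\<phi> s (y s))) * F (y t) \<partial>PiM I (\<lambda>_. lam))
      = (\<Prod>s\<in>I. integral\<^sup>N lam (H s))"
    using product_nn_integral_prod[OF I(1) Hm] by simp
  also have "\<dots> = integral\<^sup>N lam (H t) * (\<Prod>s\<in>I-{t}. integral\<^sup>N lam (H s))" using I by (simp add: prod.remove)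
  also have "(\<Prod>s\<in>I-{t}. integral\<^sup>N lam (H s)) = 1"
    using dens unfolding H_def is_density_def by (intro prod.neutral) auto
  finally show ?thesis unfolding H_def by simp
qed


lemma e2ennreal_mult_ereal:
  assumes "0 \<le> a"
  shows "e2ennreal (ereal a * d) = ennreal a * e2ennreal d"
proof (cases "a = 0")
  case True then show ?thesis by (simp add: zero_ereal_def[symmetric] e2ennreal_neg)
next
  case False
  then have a: "a > 0" using assms by simp
  show ?thesis
  proof (cases d)
    case (real r)
    then show ?thesis using a by (simp add: ennreal_mult')
  next
    case PInf then show ?thesis using a by (simp add: ennreal_mult_top)
  next
    case MInf then show ?thesis using a by (simp add: e2ennreal_neg)
  qed
qed


lemma Nbound:
  assumes a: "0 \<le> a" and b: "0 \<le> b" and d: "elogratio a b \<le> d"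
  shows "ennreal a * e2ennreal (- d) \<le> ennreal b"
proof (cases "a = 0")
  case True then show ?thesis by simp
next
  case False
  then have a0: "a > 0" using a by simp
  show ?thesis
  proof (cases "b = 0")
    case True
    then have "d = \<infinity>" using d a0 unfolding elogratio_def by simp
    then show ?thesis by (simp add: e2ennreal_neg)
  next
    case False
    then have b0: "b > 0" using b by simp
    then have "ereal (ln (a / b)) \<le> d" using d a0 unfolding elogratio_def by simp
    then have "- d \<le> ereal (- ln (a / b))" by (metis ereal_minus_le_minus uminus_ereal.simps(1))
    then have "e2ennreal (- d) \<le> ennreal (- ln (a/b))" by (metis e2ennreal_ereal e2ennreal_mono)
    then have "ennreal a * e2ennreal (- d) \<le> ennreal a * ennreal (- ln (a/b))" by (rule mult_left_mono) simp
    also have "\<dots> = ennreal (a * (- ln (a/b)))" by (rule ennreal_mult'[OF a, symmetric])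
    also have "a * (- ln (a/b)) \<le> b"
    proof -
      have "- ln (a/b) = ln (b/a)" using a0 b0 by (simp add: ln_div)
      also have "\<dots> \<le> b/a - 1" using a0 b0 by (intro ln_le_minus_one) simp
      finally have "a * (- ln (a/b)) \<le> a * (b/a - 1)" using a0 by (intro mult_left_mono) auto
      also have "\<dots> = b - a" using a0 by (simp add: field_simps)
      finally show ?thesis using a by simp
    qed
    then have "ennreal (a * (- ln (a/b))) \<le> ennreal b" by (rule ennreal_leI)
    finally show ?thesis .
  qed
qed


lemma PN_bound:
  fixes P N :: ennreal
  assumes N: "N < top" and l: "enn2ereal P - enn2ereal N < ereal e" and e: "0 < e"
  shows "P \<le> N + ennreal e"
proof -
  obtain n where n: "N = ennreal n" "0 \<le> n" using N by (cases N) auto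
  consider (r) p where "P = ennreal p" "0 \<le> p" | (t) "P = top" by (cases P rule: ennreal_cases) auto
  then show ?thesis
  proof cases
    case r
    then have "p - n < e" using l n by simp
    then have "ennreal p \<le> ennreal (n + e)" by (intro ennreal_leI) simp
    then show ?thesis using n r e by (simp add: ennreal_plus)
  next
    case t then show ?thesis using l n by simp
  qed
qed


lemma ennreal_ineq:
  assumes "v \<le> a + (\<Sum>t\<in>T. c t)" "0 \<le> a" "finite T"
  shows "ennreal v + (\<Sum>t\<in>T. ennreal (- c t)) \<le> ennreal a + (\<Sum>t\<in>T. ennreal (c t)) + ennreal (- v)"
proof -
  have e: "ennreal x = ennreal (max x 0)" for x :: real by (simp add: max_def ennreal_neg)
  have ct: "c t = max (c t) 0 - max (- c t) 0" for t by (simp add: max_def)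
  have "(\<Sum>t\<in>T. c t) = (\<Sum>t\<in>T. max (c t) 0 - max (- c t) 0)" by (subst ct) (rule refl)
  also have "\<dots> = (\<Sum>t\<in>T. max (c t) 0) - (\<Sum>t\<in>T. max (- c t) 0)" by (rule sum_subtractf)
  finally have s: "(\<Sum>t\<in>T. c t) = (\<Sum>t\<in>T. max (c t) 0) - (\<Sum>t\<in>T. max (- c t) 0)" .
  have vv: "v = max v 0 - max (- v) 0" by (simp add: max_def)
  have r: "max v 0 + (\<Sum>t\<in>T. max (- c t) 0) \<le> a + (\<Sum>t\<in>T. max (c t) 0) + max (- v) 0"
    using assms(1) s vv by linarith
  have n1: "0 \<le> (\<Sum>t\<in>T. max (- c t) 0)" "0 \<le> (\<Sum>t\<in>T. max (c t) 0)" by (auto intro: sum_nonneg)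
  have L: "ennreal v + (\<Sum>t\<in>T. ennreal (- c t)) = ennreal (max v 0 + (\<Sum>t\<in>T. max (- c t) 0))"
  proof -
    have "(\<Sum>t\<in>T. ennreal (- c t)) = (\<Sum>t\<in>T. ennreal (max (- c t) 0))" by (subst e) (rule refl)
    also have "\<dots> = ennreal (\<Sum>t\<in>T. max (- c t) 0)" by (rule sum_ennreal) simp
    finally have A: "(\<Sum>t\<in>T. ennreal (- c t)) = ennreal (\<Sum>t\<in>T. max (- c t) 0)" .
    have B: "ennreal (max v 0 + (\<Sum>t\<in>T. max (- c t) 0)) = ennreal (max v 0) + ennreal (\<Sum>t\<in>T. max (- c t) 0)"
      by (rule ennreal_plus) (auto simp: n1)
    show ?thesis by (subst e[of v]) (simp only: A B)
  qed
  have R: "ennreal a + (\<Sum>t\<in>T. ennreal (c t)) + ennreal (- v) = ennreal (a + (\<Sum>t\<in>T. max (c t) 0) + max (- v) 0)"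
  proof -
    have "(\<Sum>t\<in>T. ennreal (c t)) = (\<Sum>t\<in>T. ennreal (max (c t) 0))" by (subst e) (rule refl)
    also have "\<dots> = ennreal (\<Sum>t\<in>T. max (c t) 0)" by (rule sum_ennreal) simp
    finally have A: "(\<Sum>t\<in>T. ennreal (c t)) = ennreal (\<Sum>t\<in>T. max (c t) 0)" .
    have B1: "ennreal (a + (\<Sum>t\<in>T. max (c t) 0) + max (- v) 0) = ennreal (a + (\<Sum>t\<in>T. max (c t) 0)) + ennreal (max (- v) 0)"
      using n1 assms(2) by (intro ennreal_plus) auto
    have B2: "ennreal (a + (\<Sum>t\<in>T. max (c t) 0)) = ennreal a + ennreal (\<Sum>t\<in>T. max (c t) 0)"
      using n1 assms(2) by (intro ennreal_plus) auto
    show ?thesis by (simp only: A B1 B2 e[of "- v", symmetric])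
  qed
  show ?thesis unfolding L R by (rule ennreal_leI[OF r])
qed

lemma mix_int:
  fixes n :: nat
  assumes lam: "sigma_finite_measure lam" and P: "finite P" and t: "t < n"
    and dens: "\<forall>x\<in>P. \<forall>s<n. is_density lam (\<phi> x s)" and c: "\<forall>x\<in>P. 0 \<le> c x"
    and F: "F \<in> borel_measurable lam"
  shows "(\<integral>\<^sup>+y. ennreal (\<Sum>x\<in>P. c x * (\<Prod>s\<in>{0..<n}. \<phi> x s (y s))) * F (y t) \<partial>PiM {0..<n} (\<lambda>_. lam))
       = (\<Sum>x\<in>P. ennreal (c x) * (\<integral>\<^sup>+z. ennreal (\<phi> x t z) * F z \<partial>lam))"
proof -
  have nn: "0 \<le> \<phi> x s z" if "x \<in> P" "s < n" for x s z using dens that unfolding is_density_def by auto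
  have ms: "\<phi> x s \<in> borel_measurable lam" if "x \<in> P" "s < n" for x s using dens that unfolding is_density_def by auto
  have e: "ennreal (\<Sum>x\<in>P. c x * (\<Prod>s\<in>{0..<n}. \<phi> x s (y s))) * F (y t)
      = (\<Sum>x\<in>P. ennreal (c x) * ((\<Prod>s\<in>{0..<n}. ennreal (\<phi> x s (y s))) * F (y t)))" for y
  proof -
    have "ennreal (\<Sum>x\<in>P. c x * (\<Prod>s\<in>{0..<n}. \<phi> x s (y s)))
        = (\<Sum>x\<in>P. ennreal (c x * (\<Prod>s\<in>{0..<n}. \<phi> x s (y s))))"
      using c nn by (intro sum_ennreal[symmetric] mult_nonneg_nonneg prod_nonneg) auto
    also have "\<dots> = (\<Sum>x\<in>P. ennreal (c x) * (\<Prod>s\<in>{0..<n}. ennreal (\<phi> x s (y s))))"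
    proof (intro sum.cong refl)
      fix x assume x: "x \<in> P"
      have "(\<Prod>s\<in>{0..<n}. ennreal (\<phi> x s (y s))) = ennreal (\<Prod>s\<in>{0..<n}. \<phi> x s (y s))"
        by (rule prod_ennreal) (use nn x in auto)
      then show "ennreal (c x * (\<Prod>s\<in>{0..<n}. \<phi> x s (y s))) = ennreal (c x) * (\<Prod>s\<in>{0..<n}. ennreal (\<phi> x s (y s)))"
        using c x by (simp add: ennreal_mult')
    qed
    finally show ?thesis by (simp add: sum_distrib_right mult.assoc)
  qed
  have MR: "(\<lambda>y. g (y s)) \<in> borel_measurable (PiM {0..<n} (\<lambda>_. lam))"
    if "g \<in> borel_measurable lam" "s < n" for g :: "_ \<Rightarrow> real" and s :: nat
    using that by (intro measurable_compose[OF measurable_component_singleton]) auto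
  have ME: "(\<lambda>y. g (y s)) \<in> borel_measurable (PiM {0..<n} (\<lambda>_. lam))"
    if "g \<in> borel_measurable lam" "s < n" for g :: "_ \<Rightarrow> ennreal" and s :: nat
    using that by (intro measurable_compose[OF measurable_component_singleton]) auto
  show ?thesis unfolding e
  proof (subst nn_integral_sum)
    show "\<And>x. x \<in> P \<Longrightarrow> (\<lambda>y. ennreal (c x) * ((\<Prod>s\<in>{0..<n}. ennreal (\<phi> x s (y s))) * F (y t)))
          \<in> borel_measurable (PiM {0..<n} (\<lambda>_. lam))"
      using ms F t by (intro borel_measurable_times_ennreal borel_measurable_prod_ennreal ME borel_measurable_const
          measurable_compose[OF MR measurable_ennreal]) auto
    show "(\<Sum>x\<in>P. \<integral>\<^sup>+y. ennreal (c x) * ((\<Prod>s\<in>{0..<n}. ennreal (\<phi> x s (y s))) * F (y t)) \<partial>PiM {0..<n} (\<lambda>_. lam))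
      = (\<Sum>x\<in>P. ennreal (c x) * (\<integral>\<^sup>+z. ennreal (\<phi> x t z) * F z \<partial>lam))"
    proof (intro sum.cong refl)
      fix x assume x: "x \<in> P"
      have m: "(\<lambda>y. (\<Prod>s\<in>{0..<n}. ennreal (\<phi> x s (y s))) * F (y t)) \<in> borel_measurable (PiM {0..<n} (\<lambda>_. lam))"
        using ms[OF x] F t by (intro borel_measurable_times_ennreal borel_measurable_prod_ennreal ME
          measurable_compose[OF MR measurable_ennreal]) auto
      show "(\<integral>\<^sup>+y. ennreal (c x) * ((\<Prod>s\<in>{0..<n}. ennreal (\<phi> x s (y s))) * F (y t)) \<partial>PiM {0..<n} (\<lambda>_. lam))
         = ennreal (c x) * (\<integral>\<^sup>+z. ennreal (\<phi> x t z) * F z \<partial>lam)"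
        using prod_int[OF lam _ _ _ F, of "{0..<n}" t "\<phi> x"] dens x t by (simp add: nn_integral_cmult[OF m])
    qed
  qed
qed





lemma core_ineq:
  fixes w b g h :: "'p \<Rightarrow> real" and Kc E :: real
  assumes fin: "finite P" and wb: "\<forall>x\<in>P. w x \<le> Kc * b x" and gh: "\<forall>x\<in>P. g x \<le> E * h x"
    and nn: "\<forall>x\<in>P. 0 \<le> w x \<and> 0 \<le> g x \<and> 0 \<le> b x \<and> 0 \<le> h x"
    and p1: "0 < (\<Sum>x\<in>P. w x * g x)" and p2: "0 < (\<Sum>x\<in>P. b x * h x)"
    and Kc: "0 < Kc" and E: "0 < E"
  shows "ln ((\<Sum>x\<in>P. w x * g x) / (\<Sum>x\<in>P. b x * h x)) \<le> ln Kc + ln E"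
proof -
  have "w x * g x \<le> Kc * b x * (E * h x)" if x: "x \<in> P" for x
    by (rule mult_mono) (use wb gh nn x in force)+
  then have "(\<Sum>x\<in>P. w x * g x) \<le> (\<Sum>x\<in>P. (Kc * b x) * (E * h x))"
    by (intro sum_mono) auto
  also have "\<dots> = Kc * E * (\<Sum>x\<in>P. b x * h x)" by (simp add: sum_distrib_left mult_ac)
  finally have "(\<Sum>x\<in>P. w x * g x) / (\<Sum>x\<in>P. b x * h x) \<le> Kc * E" using p2 by (simp add: divide_le_eq)
  then have "ln ((\<Sum>x\<in>P. w x * g x) / (\<Sum>x\<in>P. b x * h x)) \<le> ln (Kc * E)"
    using p1 p2 Kc E by (subst ln_le_cancel_iff) auto
  then show ?thesis using Kc E by (simp add: ln_mult)
qed

lemma mat_norm_ge: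
  assumes "i < k" "j < k"
  shows "\<bar>M i j\<bar> \<le> mat_norm k M"
proof -
  have "{\<bar>M i j\<bar> | i j. i < k \<and> j < k} \<subseteq> (\<lambda>(i,j). \<bar>M i j\<bar>) ` ({..<k} \<times> {..<k})" by auto
  then have "finite {\<bar>M i j\<bar> | i j. i < k \<and> j < k}" by (rule finite_subset) auto
  then show ?thesis unfolding mat_norm_def using assms by (intro Max_ge) auto
qed

lemma final_ereal:
  fixes IGp IGm :: ennreal
  assumes "IGp \<le> ennreal B + IGm" "IGm < top" "0 \<le> B"
  shows "enn2ereal IGp - enn2ereal IGm \<le> ereal B"
proof -
  obtain m where m: "IGm = ennreal m" "0 \<le> m" using assms(2) by (cases IGm rule: ennreal_cases) auto
  have le: "IGp \<le> ennreal (B + m)" using assms m by (simp add: ennreal_plus)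
  have "IGp \<noteq> top" using le by (metis ennreal_neq_top top_unique)
  then obtain p where p: "IGp = ennreal p" "0 \<le> p" by (cases IGp rule: ennreal_cases) auto
  have "p \<le> B + m" using le p ennreal_le_iff[of "B+m" p] assms(3) m(2) by (simp del: ennreal_plus)
  then show ?thesis using m p by simp
qed

lemma main_bound:
  fixes k :: nat and lam :: "'a::euclidean_space measure" and q :: real
    and Qs :: "nat \<Rightarrow> nat \<Rightarrow> real" and fs :: "nat \<Rightarrow> 'a \<Rightarrow> real"
    and mu :: "nat \<Rightarrow> real" and Q :: "nat \<Rightarrow> nat \<Rightarrow> real" and f :: "nat \<Rightarrow> 'a \<Rightarrow> real"
  assumes k: "k \<ge> 1"
    and lam: "sigma_finite_measure lam" "sets lam = sets borel"
    and q: "q > 0"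
    and ts: "(Qs, fs) \<in> Theta_q k q lam"
    and mu: "distr_on k mu" "\<forall>i<k. q \<le> mu i"
    and th: "(Q, f) \<in> Theta_q k q lam"
    and A1: "A1_conds k lam (Qs, fs) \<epsilon> (Q, f)"
    and eps: "\<epsilon> > 0" and n: "n \<ge> 1"
  shows "KL_dens (prod_ref lam n) (hmm_dens k n (stat_dist k Qs) (Qs, fs)) (hmm_dens k n mu (Q, f))
           \<le> ereal (ln (1/q) + real (n-1) * (\<epsilon>/q) + real n * \<epsilon>)"
proof -
  define ms where "ms = stat_dist k Qs"
  define Pn where "Pn = {0..<n} \<rightarrow>\<^sub>E {0..<k}"
  define Y where "Y = PiM {0..<n} (\<lambda>_. lam)"
  define w where "w x = ms (x 0) * (\<Prod>t\<in>{0..<n-1}. Qs (x t) (x (Suc t)))" for x :: "nat \<Rightarrow> nat"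
  define b where "b x = mu (x 0) * (\<Prod>t\<in>{0..<n-1}. Q (x t) (x (Suc t)))" for x :: "nat \<Rightarrow> nat"
  define gs where "gs x y = (\<Prod>t\<in>{0..<n}. fs (x t) (y t))" for x :: "nat \<Rightarrow> nat" and y :: "nat \<Rightarrow> 'a"
  define h where "h x y = (\<Prod>t\<in>{0..<n}. f (x t) (y t))" for x :: "nat \<Rightarrow> nat" and y :: "nat \<Rightarrow> 'a"
  define p1 where "p1 = hmm_dens k n ms (Qs, fs)"
  define p2 where "p2 = hmm_dens k n mu (Q, f)"
  have p1_eq: "p1 y = (\<Sum>x\<in>Pn. w x * gs x y)" for y
    using n unfolding p1_def hmm_dens_def Pn_def w_def gs_def by (simp add: mult.assoc)
  have p2_eq: "p2 y = (\<Sum>x\<in>Pn. b x * h x y)" for y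
    using n unfolding p2_def hmm_dens_def Pn_def b_def h_def by (simp add: mult.assoc)
  have finPn: "finite Pn" unfolding Pn_def by (simp add: finite_PiE)
  have Pnk: "x t < k" if "x \<in> Pn" "t < n" for x t using that unfolding Pn_def by auto
  have DQs: "Delta_q k q Qs" using ts unfolding Theta_q_def by auto
  have DQ: "Delta_q k q Q" using th unfolding Theta_q_def by auto
  have msd: "distr_on k ms" unfolding ms_def by (rule stat_dist_distr[OF DQs k q])
  have Qsnn: "\<forall>i<k. \<forall>j<k. 0 \<le> Qs i j" and Qsrs: "\<forall>i<k. (\<Sum>j<k. Qs i j) = 1"
    using Delta_q_bounds[OF DQs k] by auto
  have kq: "real k * q \<le> 1" using Delta_q_bounds[OF DQs k] by auto
  have q1: "q \<le> 1" using kq k q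
    by (metis dual_order.trans le_add_same_cancel2 less_le_not_le mult_le_cancel_right1 of_nat_1 of_nat_mono)
  have Qq: "\<forall>i<k. \<forall>j<k. q \<le> Q i j" using DQ unfolding Delta_q_def by auto
  have fsd: "is_density lam (fs i)" if "i < k" for i using ts that unfolding Theta_q_def by auto
  have fd: "is_density lam (f i)" if "i < k" for i using th that unfolding Theta_q_def by auto
  have fsnn: "0 \<le> fs i z" if "i < k" for i z using fsd[OF that] unfolding is_density_def by auto
  have fnn: "0 \<le> f i z" if "i < k" for i z using fd[OF that] unfolding is_density_def by auto
  have fsm: "fs i \<in> borel_measurable lam" if "i < k" for i using fsd[OF that] unfolding is_density_def by auto
  have fm: "f i \<in> borel_measurable lam" if "i < k" for i using fd[OF that] unfolding is_density_def by auto
  have w_nn: "0 \<le> w x" if "x \<in> Pn" for x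
  proof -
    have "0 \<le> ms (x 0)" using msd Pnk[OF that, of 0] n unfolding distr_on_def by auto
    moreover have "0 \<le> (\<Prod>t\<in>{0..<n-1}. Qs (x t) (x (Suc t)))"
      using Qsnn Pnk[OF that] by (intro prod_nonneg) auto
    ultimately show ?thesis unfolding w_def by simp
  qed
  have b_pos: "0 < b x" if xP: "x \<in> Pn" for x
  proof -
    have "0 < mu (x 0)" using mu Pnk[OF that, of 0] n q by force
    moreover have "0 < (\<Prod>t\<in>{0..<n-1}. Q (x t) (x (Suc t)))"
    proof (intro prod_pos)
      fix t assume "t \<in> {0..<n-1}"
      then have "x t < k" "x (Suc t) < k" using Pnk[OF xP] by auto
      then show "0 < Q (x t) (x (Suc t))" using Qq q by fastforce
    qed
    ultimately show ?thesis unfolding b_def by simp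
  qed
  have gs_nn: "0 \<le> gs x y" if "x \<in> Pn" for x y
    unfolding gs_def using fsnn Pnk[OF that] by (intro prod_nonneg) auto
  have h_nn: "0 \<le> h x y" if "x \<in> Pn" for x y
    unfolding h_def using fnn Pnk[OF that] by (intro prod_nonneg) auto
  have p1_nn: "0 \<le> p1 y" for y unfolding p1_eq using w_nn gs_nn by (intro sum_nonneg) auto
  have p2_nn: "0 \<le> p2 y" for y unfolding p2_eq using b_pos h_nn by (intro sum_nonneg) (meson less_imp_le mult_nonneg_nonneg)
  have wsum: "(\<Sum>x\<in>Pn. w x) = 1"
  proof -
    obtain m where m: "n = Suc m" using n by (cases n) auto
    have "(\<Sum>j\<in>{0..<k}. ms j) = 1" using msd unfolding distr_on_def by (simp add: atLeast0LessThan)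
    moreover have "\<forall>i\<in>{0..<k}. (\<Sum>j\<in>{0..<k}. Qs i j) = 1" using Qsrs by (simp add: atLeast0LessThan)
    ultimately show ?thesis using path_sum[where K="{0..<k}" and \<nu>=ms and Q=Qs and n=m] unfolding Pn_def w_def m by simp
  qed
  have spY: "space Y = {0..<n} \<rightarrow>\<^sub>E UNIV" unfolding Y_def using lam(2)
    by (simp add: space_PiM sets_eq_imp_space_eq)
  have Mcomp: "(\<lambda>y. g (y t)) \<in> borel_measurable Y"
    if "g \<in> borel_measurable lam" "t < n" for g :: "'a \<Rightarrow> 'c::{second_countable_topology,topological_space}" and t
    unfolding Y_def using that by (intro measurable_compose[OF measurable_component_singleton]) auto
  have gsm: "(\<lambda>y. gs x y) \<in> borel_measurable Y" if "x \<in> Pn" for x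
    unfolding gs_def using Pnk[OF that] by (intro borel_measurable_prod Mcomp fsm) auto
  have hm: "(\<lambda>y. h x y) \<in> borel_measurable Y" if "x \<in> Pn" for x
    unfolding h_def using Pnk[OF that] by (intro borel_measurable_prod Mcomp fm) auto
  have p1m[measurable]: "p1 \<in> borel_measurable Y"
    unfolding p1_eq[abs_def] using gsm by (intro borel_measurable_sum borel_measurable_times) auto
  have p2m[measurable]: "p2 \<in> borel_measurable Y"
    unfolding p2_eq[abs_def] using hm by (intro borel_measurable_sum borel_measurable_times) auto
  have A1': "mat_norm k (\<lambda>i j. Q i j - Qs i j) < \<epsilon>"
    "Max ((\<lambda>i. eint lam (\<lambda>y. ereal (fs i y) * Max ((\<lambda>j. elogratio (fs j y) (f j y)) ` {0..<k}))) ` {0..<k}) < ereal \<epsilon>"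
    "\<forall>y. (\<Sum>i<k. fs i y) > 0 \<longrightarrow> (\<Sum>j<k. f j y) > 0"
    using A1 unfolding A1_conds_def Let_def by simp_all
  define D where "D z = Max ((\<lambda>j. elogratio (fs j z) (f j z)) ` {0..<k})" for z
  have A1b: "eint lam (\<lambda>y. ereal (fs i y) * D y) < ereal \<epsilon>" if "i < k" for i
  proof -
    have "eint lam (\<lambda>y. ereal (fs i y) * D y) \<le> Max ((\<lambda>i. eint lam (\<lambda>y. ereal (fs i y) * D y)) ` {0..<k})"
      using that by (intro Max_ge) auto
    then show ?thesis using A1'(2) unfolding D_def by simp
  qed
  have A1c: "(\<Sum>j<k. f j z) > 0" if "(\<Sum>i<k. fs i z) > 0" for z using A1'(3) that by blast
  have pathpos: "\<exists>x\<in>Pn. \<forall>t<n. fs (x t) (y t) > 0" if p1p: "p1 y > 0" for y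
  proof -
    obtain x where x: "x \<in> Pn" "w x * gs x y > 0"
    proof (rule ccontr)
      assume "\<not> thesis"
      then have "\<forall>x\<in>Pn. w x * gs x y \<le> 0" using that by (meson not_le)
      then have "p1 y \<le> 0" unfolding p1_eq by (intro sum_nonpos) auto
      then show False using p1p by simp
    qed
    have "gs x y \<noteq> 0" using x by auto
    then have "fs (x t) (y t) > 0" if "t < n" for t
      using that fsnn[OF Pnk[OF x(1) that]] unfolding gs_def by (auto simp: less_le)
    then show ?thesis using x by blast
  qed
  have pos12: "p2 y > 0" if p1p: "p1 y > 0" for y
  proof -
    obtain x where x: "x \<in> Pn" and fpos: "\<And>t. t < n \<Longrightarrow> fs (x t) (y t) > 0" using pathpos[OF p1p] by blast
    have "\<exists>j<k. f j (y t) > 0" if "t < n" for t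
    proof -
      have "fs (x t) (y t) \<le> (\<Sum>i<k. fs i (y t))"
        using Pnk[OF x(1) that] fsnn by (intro member_le_sum) auto
      then have "(\<Sum>j<k. f j (y t)) > 0" using fpos[OF that] A1c by force
      then show ?thesis by (metis not_le sum_nonpos lessThan_iff)
    qed
    then obtain J where J: "\<And>t. t < n \<Longrightarrow> J t < k \<and> f (J t) (y t) > 0" by metis
    define x' where "x' = restrict J {0..<n}"
    have x'P: "x' \<in> Pn" unfolding x'_def Pn_def using J by auto
    have "h x' y > 0" unfolding h_def x'_def using J by (intro prod_pos) auto
    then have "0 < b x' * h x' y" using b_pos[OF x'P] by simp
    also have "\<dots> \<le> p2 y" unfolding p2_eq using finPn x'P b_pos h_nn
      by (intro member_le_sum) (auto intro: mult_nonneg_nonneg less_imp_le)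
    finally show ?thesis .
  qed
  have ac: "absolutely_continuous (density Y (\<lambda>y. ennreal (p2 y))) (density Y (\<lambda>y. ennreal (p1 y)))"
    unfolding absolutely_continuous_def
  proof (intro subsetI)
    fix A assume "A \<in> null_sets (density Y (\<lambda>y. ennreal (p2 y)))"
    then have A: "A \<in> sets Y" "AE y in Y. y \<in> A \<longrightarrow> ennreal (p2 y) = 0" by (simp_all add: null_sets_density_iff)
    have "AE y in Y. y \<in> A \<longrightarrow> ennreal (p1 y) = 0"
      using A(2)
    proof (rule eventually_mono)
      fix y assume "y \<in> A \<longrightarrow> ennreal (p2 y) = 0"
      then show "y \<in> A \<longrightarrow> ennreal (p1 y) = 0" using pos12[of y] p1_nn[of y]
        by (metis ennreal_eq_0_iff less_le not_le)
    qed
    then show "A \<in> null_sets (density Y (\<lambda>y. ennreal (p1 y)))" using A(1) by (simp add: null_sets_density_iff)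
  qed
  define G where "G y = (if p1 y = 0 then 0 else ereal (p1 y * ln (p1 y / p2 y)))" for y
  have KL: "KL_dens (prod_ref lam n) (hmm_dens k n (stat_dist k Qs) (Qs, fs)) (hmm_dens k n mu (Q, f)) = eint Y G"
    unfolding ms_def[symmetric] p1_def[symmetric] p2_def[symmetric] prod_ref_def Y_def[symmetric] KL_dens_def G_def
    using ac by simp
  define Aa where "Aa = ln (1/q) + real (n-1) * (\<epsilon>/q)"
  have Aa0: "0 \<le> Aa" unfolding Aa_def using q q1 eps by (auto intro!: add_nonneg_nonneg)
  have elm: "(\<lambda>z. elogratio (fs j z) (f j z)) \<in> borel_measurable lam" if "j < k" for j
  proof -
    note [measurable] = fsm[OF that] fm[OF that]
    show ?thesis unfolding elogratio_def by measurable
  qed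
  have Dmeas: "D \<in> borel_measurable lam"
  proof -
    have "(\<lambda>z. Max ((\<lambda>j. elogratio (fs j z) (f j z)) ` {0..<k})) \<in> borel_measurable lam"
      apply (rule borel_measurable_Max)
       apply simp
      apply (rule elm)
      apply simp
      done
    then show ?thesis unfolding D_def[abs_def] .
  qed
  define Dp where "Dp z = e2ennreal (D z)" for z
  define Dm where "Dm z = e2ennreal (- D z)" for z
  have Dpm: "Dp \<in> borel_measurable lam" unfolding Dp_def[abs_def]
    by (rule measurable_compose[OF Dmeas measurable_e2ennreal])
  have Dmm: "Dm \<in> borel_measurable lam" unfolding Dm_def[abs_def]
    by (rule measurable_compose[OF borel_measurable_uminus_ereal[OF Dmeas] measurable_e2ennreal])
  define PP where "PP i = (\<integral>\<^sup>+z. ennreal (fs i z) * Dp z \<partial>lam)" for i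
  define NN where "NN i = (\<integral>\<^sup>+z. ennreal (fs i z) * Dm z \<partial>lam)" for i
  have DgeE: "elogratio (fs j z) (f j z) \<le> D z" if "j < k" for j z
    unfolding D_def by (rule Max_ge) (simp, rule imageI, simp add: that)
  have NN1: "NN i \<le> 1" if "i < k" for i
  proof -
    have "NN i \<le> (\<integral>\<^sup>+z. ennreal (f i z) \<partial>lam)" unfolding NN_def Dm_def
      by (rule nn_integral_mono) (rule Nbound[OF fsnn[OF that] fnn[OF that] DgeE[OF that]])
    also have "\<dots> = 1" using fd[OF that] unfolding is_density_def by (elim conjE)
    finally show ?thesis .
  qed
  have em2: "e2ennreal (- (ereal a * d)) = ennreal a * e2ennreal (- d)" if "0 \<le> a" for a d
  proof -
    have "- (ereal a * d) = ereal a * (- d)" by simp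
    then show ?thesis using e2ennreal_mult_ereal[OF that, of "- d"] by (simp only:)
  qed
  have PNb: "PP i \<le> NN i + ennreal \<epsilon>" if "i < k" for i
  proof -
    have "eint lam (\<lambda>y. ereal (fs i y) * D y) = enn2ereal (PP i) - enn2ereal (NN i)"
      unfolding eint_def PP_def NN_def Dp_def Dm_def
      by (simp only: e2ennreal_mult_ereal[OF fsnn[OF that]] em2[OF fsnn[OF that]])
    then have "enn2ereal (PP i) - enn2ereal (NN i) < ereal \<epsilon>" using A1b[OF that] by simp
    moreover have "NN i < top" using NN1[OF that] by (simp add: le_less_trans)
    ultimately show ?thesis using PN_bound eps by blast
  qed
  define Gp where "Gp y = e2ennreal (G y)" for y
  define Gm where "Gm y = e2ennreal (- G y)" for y
  have Qsb: "Qs i j \<le> (1 + \<epsilon>/q) * Q i j" if "i < k" "j < k" for i j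
  proof -
    have "\<bar>Q i j - Qs i j\<bar> \<le> mat_norm k (\<lambda>i j. Q i j - Qs i j)" by (rule mat_norm_ge[OF that])
    then have "Qs i j \<le> Q i j + \<epsilon>" using A1'(1) by simp
    also have "\<epsilon> \<le> \<epsilon>/q * Q i j"
    proof -
      have "\<epsilon>/q * q \<le> \<epsilon>/q * Q i j" using Qq that q eps by (intro mult_left_mono) auto
      then show ?thesis using q by simp
    qed
    finally show ?thesis by (simp add: algebra_simps)
  qed
  have PW: "Gp y + (\<Sum>t\<in>{0..<n}. ennreal (p1 y) * Dm (y t))
      \<le> ennreal (p1 y * Aa) + (\<Sum>t\<in>{0..<n}. ennreal (p1 y) * Dp (y t)) + Gm y" for y
  proof (cases "p1 y = 0")
    case True then show ?thesis by (simp add: Gp_def Gm_def G_def)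
  next
    case False
    note p1ne = this
    then have p1p: "p1 y > 0" using p1_nn[of y] by simp
    have p2p: "p2 y > 0" by (rule pos12[OF p1p])
    obtain x0 where x0: "x0 \<in> Pn" "\<forall>t<n. fs (x0 t) (y t) > 0" using pathpos[OF p1p] by blast
    have Dnm: "D (y t) \<noteq> -\<infinity>" if "t < n" for t
    proof -
      have "elogratio (fs (x0 t) (y t)) (f (x0 t) (y t)) \<le> D (y t)" using DgeE Pnk[OF x0(1) that] by blast
      moreover have "elogratio (fs (x0 t) (y t)) (f (x0 t) (y t)) \<noteq> -\<infinity>" using x0(2) that unfolding elogratio_def by auto
      ultimately show ?thesis by auto
    qed
    show ?thesis
    proof (cases "\<exists>t<n. D (y t) = \<infinity>")
      case True
      then obtain t where t: "t < n" "D (y t) = \<infinity>" by blast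
      have "ennreal (p1 y) * Dp (y t) = top" using t p1p unfolding Dp_def by (simp add: ennreal_mult_top)
      moreover have "ennreal (p1 y) * Dp (y t) \<le> (\<Sum>t\<in>{0..<n}. ennreal (p1 y) * Dp (y t))"
        using t by (intro member_le_sum) auto
      ultimately have S: "(\<Sum>t\<in>{0..<n}. ennreal (p1 y) * Dp (y t)) = top" by (simp add: top_unique)
      show ?thesis by (rule order_trans[OF top_greatest]) (subst S, simp)
    next
      case False
      define d where "d t = real_of_ereal (D (y t))" for t
      have Dd: "D (y t) = ereal (d t)" if "t < n" for t
        using False Dnm[OF that] that unfolding d_def by (cases "D (y t)") auto
      define Kc where "Kc = (1/q) * (1 + \<epsilon>/q) ^ (n-1)"
      define E where "E = (\<Prod>t\<in>{0..<n}. exp (d t))"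
      have Kc0: "0 < Kc" unfolding Kc_def using q eps
        by (intro mult_pos_pos zero_less_power) (auto intro: add_pos_pos divide_pos_pos)
      have E0: "0 < E" unfolding E_def by (intro prod_pos) auto
      have wb: "\<forall>x\<in>Pn. w x \<le> Kc * b x"
      proof
        fix x assume xP: "x \<in> Pn"
        have x0k: "x 0 < k" using Pnk[OF xP, of 0] n by simp
        have "ms (x 0) \<le> (\<Sum>i<k. ms i)" using msd x0k unfolding distr_on_def by (intro member_le_sum) auto
        also have "\<dots> = 1" using msd unfolding distr_on_def by simp
        also have "1 \<le> mu (x 0) / q" using mu(2) x0k q by simp
        finally have m1: "ms (x 0) \<le> mu (x 0) / q" .
        have "(\<Prod>t\<in>{0..<n-1}. Qs (x t) (x (Suc t))) \<le> (\<Prod>t\<in>{0..<n-1}. (1 + \<epsilon>/q) * Q (x t) (x (Suc t)))"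
        proof (intro prod_mono conjI)
          fix t assume "t \<in> {0..<n-1}"
          then have tk: "x t < k" "x (Suc t) < k" using Pnk[OF xP] by auto
          show "0 \<le> Qs (x t) (x (Suc t))" using Qsnn tk by auto
          show "Qs (x t) (x (Suc t)) \<le> (1 + \<epsilon>/q) * Q (x t) (x (Suc t))" using Qsb tk by auto
        qed
        also have "\<dots> = (1 + \<epsilon>/q) ^ (n-1) * (\<Prod>t\<in>{0..<n-1}. Q (x t) (x (Suc t)))"
          by (simp add: prod.distrib)
        finally have m2: "(\<Prod>t\<in>{0..<n-1}. Qs (x t) (x (Suc t))) \<le> (1 + \<epsilon>/q) ^ (n-1) * (\<Prod>t\<in>{0..<n-1}. Q (x t) (x (Suc t)))" .
        have "w x \<le> (mu (x 0) / q) * ((1 + \<epsilon>/q) ^ (n-1) * (\<Prod>t\<in>{0..<n-1}. Q (x t) (x (Suc t))))"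
          unfolding w_def
        proof (rule mult_mono[OF m1 m2])
          show "0 \<le> mu (x 0) / q" using mu(2) x0k q by (meson less_le_trans less_imp_le divide_nonneg_pos)
          show "0 \<le> (\<Prod>t\<in>{0..<n-1}. Qs (x t) (x (Suc t)))"
            using Qsnn Pnk[OF xP] by (intro prod_nonneg) auto
        qed
        also have "\<dots> = Kc * b x" unfolding Kc_def b_def by (simp add: field_simps)
        finally show "w x \<le> Kc * b x" .
      qed
      have gh: "\<forall>x\<in>Pn. gs x y \<le> E * h x y"
      proof
        fix x assume xP: "x \<in> Pn"
        show "gs x y \<le> E * h x y"
        proof (cases "\<forall>t<n. fs (x t) (y t) > 0")
          case False
          then obtain t where "t < n" "\<not> fs (x t) (y t) > 0" by blast
          then have "gs x y = 0" unfolding gs_def using fsnn[OF Pnk[OF xP]]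
            by (metis atLeastLessThan_iff finite_atLeastLessThan le0 less_le prod_zero_iff)
          then show ?thesis using E0 h_nn[OF xP] by simp
        next
          case True
          have "fs (x t) (y t) \<le> exp (d t) * f (x t) (y t)" if t: "t < n" for t
          proof -
            have xk: "x t < k" using Pnk[OF xP t] .
            have le: "elogratio (fs (x t) (y t)) (f (x t) (y t)) \<le> ereal (d t)" using DgeE[OF xk, of "y t"] unfolding Dd[OF t] .
            have fp: "f (x t) (y t) > 0"
            proof (rule ccontr)
              assume "\<not> f (x t) (y t) > 0"
              then have "elogratio (fs (x t) (y t)) (f (x t) (y t)) = \<infinity>" using True t unfolding elogratio_def by auto
              then show False using le by simp
            qed
            then have "ln (fs (x t) (y t) / f (x t) (y t)) \<le> d t" using le True t unfolding elogratio_def by simp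
            then have "fs (x t) (y t) / f (x t) (y t) \<le> exp (d t)" using True t fp
              by (metis divide_pos_pos exp_le_cancel_iff exp_ln)
            then show ?thesis using fp by (simp add: divide_le_eq mult.commute)
          qed
          then have "gs x y \<le> (\<Prod>t\<in>{0..<n}. exp (d t) * f (x t) (y t))" unfolding gs_def
            using fsnn[OF Pnk[OF xP]] by (intro prod_mono) auto
          also have "\<dots> = E * h x y" unfolding E_def h_def by (simp add: prod.distrib)
          finally show ?thesis .
        qed
      qed
      have core: "ln (p1 y / p2 y) \<le> ln Kc + ln E"
        unfolding p1_eq p2_eq
      proof (rule core_ineq[OF finPn wb gh _ _ _ Kc0 E0])
        show "\<forall>x\<in>Pn. 0 \<le> w x \<and> 0 \<le> gs x y \<and> 0 \<le> b x \<and> 0 \<le> h x y"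
          using w_nn gs_nn b_pos h_nn by (auto intro: less_imp_le)
        show "0 < (\<Sum>x\<in>Pn. w x * gs x y)" using p1p p1_eq by simp
        show "0 < (\<Sum>x\<in>Pn. b x * h x y)" using p2p p2_eq by simp
      qed
      have lnKc: "ln Kc \<le> Aa"
      proof -
        have "ln Kc = ln (1/q) + real (n-1) * ln (1 + \<epsilon>/q)"
        proof -
          have p1': "0 < 1/q" "0 < (1 + \<epsilon>/q) ^ (n-1)" using q eps
            by (auto intro!: zero_less_power add_pos_pos divide_pos_pos)
          have "ln Kc = ln (1/q) + ln ((1 + \<epsilon>/q) ^ (n-1))" unfolding Kc_def by (rule ln_mult_pos[OF p1'])
          then show ?thesis by (simp only: ln_realpow)
        qed
        also have "\<dots> \<le> ln (1/q) + real (n-1) * (\<epsilon>/q)"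
          using q eps by (intro add_left_mono mult_left_mono ln_add_one_self_le_self) auto
        finally show ?thesis unfolding Aa_def .
      qed
      have lnE: "ln E = (\<Sum>t\<in>{0..<n}. d t)" unfolding E_def by (simp add: ln_prod)
      have "ln (p1 y / p2 y) \<le> Aa + (\<Sum>t\<in>{0..<n}. d t)" using core lnKc lnE by simp
      then have "p1 y * ln (p1 y / p2 y) \<le> p1 y * (Aa + (\<Sum>t\<in>{0..<n}. d t))"
        using p1p by (intro mult_left_mono) auto
      then have vle: "p1 y * ln (p1 y / p2 y) \<le> p1 y * Aa + (\<Sum>t\<in>{0..<n}. p1 y * d t)"
        by (simp add: algebra_simps sum_distrib_left)
      note ei = ennreal_ineq[OF vle mult_nonneg_nonneg[OF p1_nn Aa0] finite_atLeastLessThan]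
      have g1: "Gp y = ennreal (p1 y * ln (p1 y / p2 y))" unfolding Gp_def G_def using p1ne by simp
      have g2: "Gm y = ennreal (- (p1 y * ln (p1 y / p2 y)))" unfolding Gm_def G_def using p1ne by simp
      have s1: "(\<Sum>t\<in>{0..<n}. ennreal (p1 y) * Dm (y t)) = (\<Sum>t\<in>{0..<n}. ennreal (- (p1 y * d t)))"
      proof (intro sum.cong refl)
        fix t assume "t \<in> {0..<n}"
        then show "ennreal (p1 y) * Dm (y t) = ennreal (- (p1 y * d t))"
          unfolding Dm_def using Dd p1_nn[of y] by (simp add: ennreal_mult'[symmetric])
      qed
      have s2: "(\<Sum>t\<in>{0..<n}. ennreal (p1 y) * Dp (y t)) = (\<Sum>t\<in>{0..<n}. ennreal (p1 y * d t))"
      proof (intro sum.cong refl)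
        fix t assume "t \<in> {0..<n}"
        then show "ennreal (p1 y) * Dp (y t) = ennreal (p1 y * d t)"
          unfolding Dp_def using Dd p1_nn[of y] by (simp add: ennreal_mult'[symmetric])
      qed
      show ?thesis unfolding g1 g2 s1 s2 using ei by simp
    qed
  qed
  have dens1: "\<forall>x\<in>Pn. \<forall>s<n. is_density lam (fs (x s))" using fsd Pnk by blast
  have dens2: "\<forall>x\<in>Pn. \<forall>s<n. is_density lam (f (x s))" using fd Pnk by blast
  have int1: "(\<integral>\<^sup>+y. ennreal (p1 y) * F (y t) \<partial>Y) = (\<Sum>x\<in>Pn. ennreal (w x) * (\<integral>\<^sup>+z. ennreal (fs (x t) z) * F z \<partial>lam))"
    if F: "F \<in> borel_measurable lam" and t: "t < n" for F t
  proof -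
    have e: "\<And>y. p1 y = (\<Sum>x\<in>Pn. w x * (\<Prod>s\<in>{0..<n}. fs (x s) (y s)))" using p1_eq unfolding gs_def by simp
    have "(\<integral>\<^sup>+y. ennreal (p1 y) * F (y t) \<partial>Y)
        = (\<integral>\<^sup>+y. ennreal (\<Sum>x\<in>Pn. w x * (\<Prod>s\<in>{0..<n}. fs (x s) (y s))) * F (y t) \<partial>PiM {0..<n} (\<lambda>_. lam))"
      unfolding Y_def by (simp only: e)
    also have "\<dots> = (\<Sum>x\<in>Pn. ennreal (w x) * (\<integral>\<^sup>+z. ennreal (fs (x t) z) * F z \<partial>lam))"
      by (rule mix_int[where \<phi>="\<lambda>x s. fs (x s)" and c=w, OF lam(1) finPn t dens1 _ F]) (use w_nn in blast)
    finally show ?thesis .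
  qed
  have int2: "(\<integral>\<^sup>+y. ennreal (p2 y) * F (y t) \<partial>Y) = (\<Sum>x\<in>Pn. ennreal (b x) * (\<integral>\<^sup>+z. ennreal (f (x t) z) * F z \<partial>lam))"
    if F: "F \<in> borel_measurable lam" and t: "t < n" for F t
  proof -
    have e: "\<And>y. p2 y = (\<Sum>x\<in>Pn. b x * (\<Prod>s\<in>{0..<n}. f (x s) (y s)))" using p2_eq unfolding h_def by simp
    have "(\<integral>\<^sup>+y. ennreal (p2 y) * F (y t) \<partial>Y)
        = (\<integral>\<^sup>+y. ennreal (\<Sum>x\<in>Pn. b x * (\<Prod>s\<in>{0..<n}. f (x s) (y s))) * F (y t) \<partial>PiM {0..<n} (\<lambda>_. lam))"
      unfolding Y_def by (simp only: e)
    also have "\<dots> = (\<Sum>x\<in>Pn. ennreal (b x) * (\<integral>\<^sup>+z. ennreal (f (x t) z) * F z \<partial>lam))"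
      by (rule mix_int[where \<phi>="\<lambda>x s. f (x s)" and c=b, OF lam(1) finPn t dens2 _ F]) (use b_pos in \<open>blast intro: less_imp_le\<close>)
    finally show ?thesis .
  qed
  have n0: "0 < n" using n by simp
  have fs1: "(\<integral>\<^sup>+z. ennreal (fs i z) \<partial>lam) = 1" if "i < k" for i
    using fsd[OF that] unfolding is_density_def by (elim conjE)
  have f1: "(\<integral>\<^sup>+z. ennreal (f i z) \<partial>lam) = 1" if "i < k" for i
    using fd[OF that] unfolding is_density_def by (elim conjE)
  have IA: "(\<integral>\<^sup>+y. ennreal (p1 y * Aa) \<partial>Y) = ennreal Aa"
  proof -
    have "(\<integral>\<^sup>+y. ennreal (p1 y * Aa) \<partial>Y) = (\<integral>\<^sup>+y. ennreal (p1 y) * (\<lambda>_. ennreal Aa) (y 0) \<partial>Y)"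
      by (intro nn_integral_cong) (simp add: ennreal_mult[OF p1_nn Aa0])
    also have "\<dots> = (\<Sum>x\<in>Pn. ennreal (w x) * (\<integral>\<^sup>+z. ennreal (fs (x 0) z) * ennreal Aa \<partial>lam))"
      by (rule int1[OF _ n0]) simp
    also have "\<dots> = (\<Sum>x\<in>Pn. ennreal (w x) * ennreal Aa)"
    proof (intro sum.cong refl)
      fix x assume x: "x \<in> Pn"
      have "(\<integral>\<^sup>+z. ennreal (fs (x 0) z) * ennreal Aa \<partial>lam) = (\<integral>\<^sup>+z. ennreal (fs (x 0) z) \<partial>lam) * ennreal Aa"
        by (rule nn_integral_multc) (use fsm[OF Pnk[OF x n0]] in simp)
      then show "ennreal (w x) * (\<integral>\<^sup>+z. ennreal (fs (x 0) z) * ennreal Aa \<partial>lam) = ennreal (w x) * ennreal Aa"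
        using fs1[OF Pnk[OF x n0]] by simp
    qed
    also have "\<dots> = (\<Sum>x\<in>Pn. ennreal (w x)) * ennreal Aa"
      by (rule sum_distrib_right[symmetric])
    also have "(\<Sum>x\<in>Pn. ennreal (w x)) = 1"
      using sum_ennreal[of Pn w, OF w_nn] wsum by (simp only: ennreal_1)
    finally show ?thesis by (simp only: mult_1)
  qed
  have Ip2: "(\<integral>\<^sup>+y. ennreal (p2 y) \<partial>Y) < top"
  proof -
    have "(\<integral>\<^sup>+y. ennreal (p2 y) \<partial>Y) = (\<integral>\<^sup>+y. ennreal (p2 y) * (\<lambda>_. 1) (y 0) \<partial>Y)" by simp
    also have "\<dots> = (\<Sum>x\<in>Pn. ennreal (b x) * (\<integral>\<^sup>+z. ennreal (f (x 0) z) * 1 \<partial>lam))"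
      by (rule int2[OF _ n0]) simp
    also have "\<dots> = (\<Sum>x\<in>Pn. ennreal (b x))"
      by (intro sum.cong refl) (use f1 Pnk n0 in simp)
    also have "\<dots> = ennreal (\<Sum>x\<in>Pn. b x)" by (rule sum_ennreal) (use b_pos in \<open>simp add: less_imp_le\<close>)
    also have "\<dots> < top" by simp
    finally show ?thesis .
  qed
  have Gm_le: "Gm y \<le> ennreal (p2 y)" for y
  proof (cases "p1 y = 0")
    case True then show ?thesis unfolding Gm_def G_def by simp
  next
    case False
    then have p1p: "p1 y > 0" using p1_nn[of y] by simp
    have p2p: "p2 y > 0" by (rule pos12[OF p1p])
    have "Gm y = e2ennreal (- (ereal (p1 y) * ereal (ln (p1 y / p2 y))))" unfolding Gm_def G_def using False by simp
    also have "\<dots> = ennreal (p1 y) * e2ennreal (- ereal (ln (p1 y / p2 y)))" by (rule em2[OF p1_nn])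
    also have "\<dots> \<le> ennreal (p2 y)"
      by (rule Nbound[OF p1_nn p2_nn]) (use p1p p2p in \<open>simp add: elogratio_def\<close>)
    finally show ?thesis .
  qed
  have Gmeas: "G \<in> borel_measurable Y" unfolding G_def[abs_def] by measurable
  have Gpm: "Gp \<in> borel_measurable Y" unfolding Gp_def[abs_def]
    by (rule measurable_compose[OF Gmeas measurable_e2ennreal])
  have Gmm: "Gm \<in> borel_measurable Y" unfolding Gm_def[abs_def]
    by (rule measurable_compose[OF borel_measurable_uminus_ereal[OF Gmeas] measurable_e2ennreal])
  have p1e: "(\<lambda>y. ennreal (p1 y)) \<in> borel_measurable Y" by (rule measurable_compose[OF p1m measurable_ennreal])
  have termm: "(\<lambda>y. ennreal (p1 y) * H (y t)) \<in> borel_measurable Y" if "H \<in> borel_measurable lam" "t \<in> {0..<n}" for H t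
  proof -
    have "t < n" using that(2) by simp
    then show ?thesis by (rule borel_measurable_times_ennreal[OF p1e Mcomp[OF that(1)]])
  qed
  have intDm: "(\<integral>\<^sup>+y. ennreal (p1 y) * Dm (y t) \<partial>Y) = (\<Sum>x\<in>Pn. ennreal (w x) * NN (x t))" if "t \<in> {0..<n}" for t
    unfolding NN_def by (rule int1[OF Dmm]) (use that in simp)
  have intDp: "(\<integral>\<^sup>+y. ennreal (p1 y) * Dp (y t) \<partial>Y) = (\<Sum>x\<in>Pn. ennreal (w x) * PP (x t))" if "t \<in> {0..<n}" for t
    unfolding PP_def by (rule int1[OF Dpm]) (use that in simp)
  define SN where "SN = (\<Sum>t\<in>{0..<n}. \<Sum>x\<in>Pn. ennreal (w x) * NN (x t))"
  define SP where "SP = (\<Sum>t\<in>{0..<n}. \<Sum>x\<in>Pn. ennreal (w x) * PP (x t))"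
  have LHS: "(\<integral>\<^sup>+y. Gp y + (\<Sum>t\<in>{0..<n}. ennreal (p1 y) * Dm (y t)) \<partial>Y) = (\<integral>\<^sup>+y. Gp y \<partial>Y) + SN"
  proof -
    have "(\<integral>\<^sup>+y. Gp y + (\<Sum>t\<in>{0..<n}. ennreal (p1 y) * Dm (y t)) \<partial>Y)
        = (\<integral>\<^sup>+y. Gp y \<partial>Y) + (\<integral>\<^sup>+y. (\<Sum>t\<in>{0..<n}. ennreal (p1 y) * Dm (y t)) \<partial>Y)"
      by (rule nn_integral_add[OF Gpm borel_measurable_sum]) (erule termm[OF Dmm])
    also have "(\<integral>\<^sup>+y. (\<Sum>t\<in>{0..<n}. ennreal (p1 y) * Dm (y t)) \<partial>Y) = (\<Sum>t\<in>{0..<n}. \<integral>\<^sup>+y. ennreal (p1 y) * Dm (y t) \<partial>Y)"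
      by (rule nn_integral_sum) (erule termm[OF Dmm])
    also have "\<dots> = SN" unfolding SN_def
      by (rule sum.cong[OF refl]) (erule intDm)
    finally show ?thesis .
  qed
  have RHS: "(\<integral>\<^sup>+y. ennreal (p1 y * Aa) + (\<Sum>t\<in>{0..<n}. ennreal (p1 y) * Dp (y t)) + Gm y \<partial>Y)
      = ennreal Aa + SP + (\<integral>\<^sup>+y. Gm y \<partial>Y)"
  proof -
    have m1: "(\<lambda>y. ennreal (p1 y * Aa)) \<in> borel_measurable Y" by (intro measurable_compose[OF _ measurable_ennreal] borel_measurable_times p1m borel_measurable_const)
    have m2: "(\<lambda>y. \<Sum>t\<in>{0..<n}. ennreal (p1 y) * Dp (y t)) \<in> borel_measurable Y"
      by (rule borel_measurable_sum) (erule termm[OF Dpm])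
    have "(\<integral>\<^sup>+y. ennreal (p1 y * Aa) + (\<Sum>t\<in>{0..<n}. ennreal (p1 y) * Dp (y t)) + Gm y \<partial>Y)
        = (\<integral>\<^sup>+y. ennreal (p1 y * Aa) + (\<Sum>t\<in>{0..<n}. ennreal (p1 y) * Dp (y t)) \<partial>Y) + (\<integral>\<^sup>+y. Gm y \<partial>Y)"
      by (rule nn_integral_add[OF borel_measurable_add[OF m1 m2] Gmm])
    also have "(\<integral>\<^sup>+y. ennreal (p1 y * Aa) + (\<Sum>t\<in>{0..<n}. ennreal (p1 y) * Dp (y t)) \<partial>Y)
        = (\<integral>\<^sup>+y. ennreal (p1 y * Aa) \<partial>Y) + (\<integral>\<^sup>+y. (\<Sum>t\<in>{0..<n}. ennreal (p1 y) * Dp (y t)) \<partial>Y)"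
      by (rule nn_integral_add[OF m1 m2])
    also have "(\<integral>\<^sup>+y. (\<Sum>t\<in>{0..<n}. ennreal (p1 y) * Dp (y t)) \<partial>Y) = (\<Sum>t\<in>{0..<n}. \<integral>\<^sup>+y. ennreal (p1 y) * Dp (y t) \<partial>Y)"
      by (rule nn_integral_sum) (erule termm[OF Dpm])
    also have "\<dots> = SP" unfolding SP_def
      by (rule sum.cong[OF refl]) (erule intDp)
    finally show ?thesis unfolding IA .
  qed
  have main: "(\<integral>\<^sup>+y. Gp y \<partial>Y) + SN \<le> ennreal Aa + SP + (\<integral>\<^sup>+y. Gm y \<partial>Y)"
    unfolding LHS[symmetric] RHS[symmetric] by (rule nn_integral_mono) (rule PW)
  have SPb: "SP \<le> SN + ennreal (real n * \<epsilon>)"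
  proof -
    have "SP \<le> (\<Sum>t\<in>{0..<n}. \<Sum>x\<in>Pn. ennreal (w x) * (NN (x t) + ennreal \<epsilon>))" unfolding SP_def
      by (intro sum_mono mult_left_mono) (use PNb Pnk in auto)
    also have "\<dots> = SN + (\<Sum>t\<in>{0..<n}. \<Sum>x\<in>Pn. ennreal (w x) * ennreal \<epsilon>)"
      unfolding SN_def by (simp add: distrib_left sum.distrib)
    also have "(\<Sum>t\<in>{0..<n}. \<Sum>x\<in>Pn. ennreal (w x) * ennreal \<epsilon>) = (\<Sum>t\<in>{0..<n}. ennreal \<epsilon>)"
    proof (intro sum.cong refl)
      fix t
      have "(\<Sum>x\<in>Pn. ennreal (w x) * ennreal \<epsilon>) = (\<Sum>x\<in>Pn. ennreal (w x)) * ennreal \<epsilon>"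
        by (rule sum_distrib_right[symmetric])
      also have "(\<Sum>x\<in>Pn. ennreal (w x)) = 1"
        using sum_ennreal[of Pn w, OF w_nn] wsum by (simp only: ennreal_1)
      finally show "(\<Sum>x\<in>Pn. ennreal (w x) * ennreal \<epsilon>) = ennreal \<epsilon>" by (simp only: mult_1)
    qed
    also have "\<dots> = ennreal (real n * \<epsilon>)" using eps by (simp add: ennreal_mult ennreal_of_nat_eq_real_of_nat)
    finally show ?thesis .
  qed
  have SNfin: "SN \<noteq> top"
  proof -
    have NNt: "NN i \<noteq> top" if "i < k" for i using NN1[OF that] by (auto simp: top_unique)
    have "\<forall>t\<in>{0..<n}. \<forall>x\<in>Pn. ennreal (w x) * NN (x t) \<noteq> top"
      using Pnk NNt by (auto simp: ennreal_mult_eq_top_iff)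
    then show ?thesis unfolding SN_def using finPn by simp
  qed
  have IGm: "(\<integral>\<^sup>+y. Gm y \<partial>Y) < top"
    using Ip2 nn_integral_mono[of Y Gm "\<lambda>y. ennreal (p2 y)"] Gm_le by (meson le_less_trans)
  have "(\<integral>\<^sup>+y. Gp y \<partial>Y) + SN \<le> SN + (ennreal (Aa + real n * \<epsilon>) + (\<integral>\<^sup>+y. Gm y \<partial>Y))"
  proof -
    have "ennreal Aa + SP + (\<integral>\<^sup>+y. Gm y \<partial>Y) \<le> ennreal Aa + (SN + ennreal (real n * \<epsilon>)) + (\<integral>\<^sup>+y. Gm y \<partial>Y)"
      using SPb by (intro add_mono order_refl)
    also have "\<dots> = SN + (ennreal (Aa + real n * \<epsilon>) + (\<integral>\<^sup>+y. Gm y \<partial>Y))"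
      using Aa0 eps by (simp add: ennreal_plus[symmetric] add_ac del: ennreal_plus)
    finally show ?thesis by (rule order_trans[OF main])
  qed
  then have "(\<integral>\<^sup>+y. Gp y \<partial>Y) \<le> ennreal (Aa + real n * \<epsilon>) + (\<integral>\<^sup>+y. Gm y \<partial>Y)"
    using SNfin by (simp add: add.commute[of _ SN] ennreal_add_left_cancel_le)
  then have "eint Y G \<le> ereal (Aa + real n * \<epsilon>)"
    unfolding eint_def Gp_def[symmetric] Gm_def[symmetric]
    by (rule final_ereal[OF _ IGm]) (use Aa0 eps in simp)
  then show ?thesis unfolding KL Aa_def by simp
qed

theorem lemma1:
  fixes k :: nat and lam :: "'a::euclidean_space measure" and q :: real
    and Qs :: "nat \<Rightarrow> nat \<Rightarrow> real" and fs :: "nat \<Rightarrow> 'a \<Rightarrow> real"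
    and mu :: "nat \<Rightarrow> real"
    and pQ :: "(nat \<Rightarrow> nat \<Rightarrow> real) measure" and pf :: "(nat \<Rightarrow> 'a \<Rightarrow> real) measure"
    and \<epsilon>0 :: real and Th :: "real \<Rightarrow> 'a param set"
  assumes k: "k \<ge> 1"
    and lam: "sigma_finite_measure lam" "sets lam = sets borel"
    and q: "q > 0"
    and ts: "(Qs, fs) \<in> Theta_q k q lam"
    and mu: "distr_on k mu" "\<forall>i<k. q \<le> mu i"
    and prior: "prob_space pQ" "prob_space pf"
    and A1_eps0: "\<epsilon>0 > 0"
    and A1_sub: "\<forall>\<epsilon>. 0 < \<epsilon> \<and> \<epsilon> < \<epsilon>0 \<longrightarrow> Th \<epsilon> \<subseteq> Theta_q k q lam"
    and A1_prior: "\<forall>\<epsilon>. 0 < \<epsilon> \<and> \<epsilon> < \<epsilon>0 \<longrightarrow>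
                     Th \<epsilon> \<in> sets (pQ \<Otimes>\<^sub>M pf) \<and> emeasure (pQ \<Otimes>\<^sub>M pf) (Th \<epsilon>) > 0"
    and A1_conds: "\<forall>\<epsilon>. 0 < \<epsilon> \<and> \<epsilon> < \<epsilon>0 \<longrightarrow> (\<forall>\<theta>\<in>Th \<epsilon>. A1_conds k lam (Qs, fs) \<epsilon> \<theta>)"
  shows "\<forall>\<epsilon>. 0 < \<epsilon> \<and> \<epsilon> < 1 \<and> \<epsilon> < \<epsilon>0 \<longrightarrow>
           (\<exists>N::nat. \<forall>n\<ge>N. \<forall>\<theta>\<in>Th \<epsilon>.
              ereal (1 / real n) *
                KL_dens (prod_ref lam n) (hmm_dens k n (stat_dist k Qs) (Qs, fs)) (hmm_dens k n mu \<theta>)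
              \<le> ereal (3 / q * \<epsilon>))"
proof (intro allI impI)
  fix \<epsilon> :: real assume e: "0 < \<epsilon> \<and> \<epsilon> < 1 \<and> \<epsilon> < \<epsilon>0"
  have DQs: "Delta_q k q Qs" using ts unfolding Theta_q_def by auto
  have kq: "real k * q \<le> 1" using Delta_q_bounds[OF DQs k] by auto
  have q1: "q \<le> 1"
  proof -
    have "1 * q \<le> real k * q" using k q by (intro mult_right_mono) auto
    then show ?thesis using kq by simp
  qed
  define N where "N = nat \<lceil>ln (1/q) / \<epsilon>\<rceil> + 1"
  show "\<exists>N::nat. \<forall>n\<ge>N. \<forall>\<theta>\<in>Th \<epsilon>.
              ereal (1 / real n) *
                KL_dens (prod_ref lam n) (hmm_dens k n (stat_dist k Qs) (Qs, fs)) (hmm_dens k n mu \<theta>)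
              \<le> ereal (3 / q * \<epsilon>)"
  proof (intro exI allI impI ballI)
    fix n \<theta> assume nN: "N \<le> n" and th: "\<theta> \<in> Th \<epsilon>"
    obtain Q f where tq: "\<theta> = (Q, f)" by (cases \<theta>)
    have n1: "n \<ge> 1" using nN unfolding N_def by simp
    have thT: "(Q, f) \<in> Theta_q k q lam" using A1_sub e th tq by blast
    have A1c: "A1_conds k lam (Qs, fs) \<epsilon> (Q, f)" using A1_conds e th tq by blast
    define B where "B = ln (1/q) + real (n-1) * (\<epsilon>/q) + real n * \<epsilon>"
    have KL: "KL_dens (prod_ref lam n) (hmm_dens k n (stat_dist k Qs) (Qs, fs)) (hmm_dens k n mu (Q, f)) \<le> ereal B"
      unfolding B_def by (rule main_bound[OF k lam q ts mu thT A1c _ n1]) (use e in simp)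
    have "ln (1/q) / \<epsilon> \<le> real n"
    proof -
      have a: "ln (1/q) / \<epsilon> \<le> real (nat \<lceil>ln (1/q) / \<epsilon>\<rceil>)" by (rule real_nat_ceiling_ge)
      have "nat \<lceil>ln (1/q) / \<epsilon>\<rceil> \<le> n" using nN unfolding N_def by (metis Suc_eq_plus1 Suc_leD)
      then have "real (nat \<lceil>ln (1/q) / \<epsilon>\<rceil>) \<le> real n" by (rule of_nat_mono)
      then show ?thesis using a by (rule order_trans[rotated])
    qed
    then have l1: "ln (1/q) \<le> real n * \<epsilon>" using e by (simp add: divide_le_eq)
    have nq: "real n * \<epsilon> \<le> real n * \<epsilon> / q"
    proof -
      have "real n * \<epsilon> * q \<le> real n * \<epsilon> * 1" using q1 e by (intro mult_left_mono) auto
      then show ?thesis using q by (simp add: le_divide_eq)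
    qed
    have n2: "real (n-1) * (\<epsilon>/q) \<le> real n * \<epsilon> / q"
    proof -
      have "real (n-1) \<le> real n" by simp
      then have "real (n-1) * (\<epsilon>/q) \<le> real n * (\<epsilon>/q)" using e q by (intro mult_right_mono) auto
      then show ?thesis by simp
    qed
    have e3: "real n * (3 / q * \<epsilon>) = real n * \<epsilon> / q + real n * \<epsilon> / q + real n * \<epsilon> / q"
      by (simp add: field_simps)
    have Bb: "B \<le> real n * (3 / q * \<epsilon>)" unfolding B_def e3 using l1 nq n2 by linarith
    have "ereal (1 / real n) * KL_dens (prod_ref lam n) (hmm_dens k n (stat_dist k Qs) (Qs, fs)) (hmm_dens k n mu (Q, f))
        \<le> ereal (1 / real n) * ereal B" by (rule ereal_mult_left_mono[OF KL]) simp
    also have "\<dots> = ereal (B / real n)" by simp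
    also have "B / real n \<le> 3 / q * \<epsilon>" using Bb n1 by (simp add: divide_le_eq mult.commute)
    finally show "ereal (1 / real n) * KL_dens (prod_ref lam n) (hmm_dens k n (stat_dist k Qs) (Qs, fs)) (hmm_dens k n mu \<theta>)
        \<le> ereal (3 / q * \<epsilon>)" unfolding tq by simp
  qed
qed


end
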